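(* Let $F_0$ be a QF-NIA formula, and let $F$ be a linearization of $F_0$ with artificial bounds $B$. Let $\mathrm{vars}(B)$ be the set of variables $V$ for which an artificial domain $[l_V,u_V]$ is imposed by $B$ (each bound of $B$ being of the form $l_V\le V$ or $V\le u_V$ for some $V\in\mathrm{vars}(B)$). For a model $M$ of $F$ define $$\mathrm{cost}(M)=\sum_{V\in\mathrm{vars}(B)}\delta(M(V),[l_V,u_V]),$$ where $\delta(z,[l,u])=l-z$ if $z<l$, $\delta(z,[l,u])=0$ if $l\le z\le u$, and $\delta(z,[l,u])=z-u$ if $z>u$. Then $\mathrm{cost}$ is admissible: $\mathrm{cost}(M)\ge 0$ for every model $M$ of $F$, and if $\mathrm{cost}(M)=0$ then $M$ (restricted to the variables of $F_0$) is a model of $F_0$.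
   Context: A QF-NIA formula is a quantifier-free CNF formula whose atoms are polynomial inequalities with integer coefficients over integer-valued variables. Artificial bounds are a finite set $B$ of constraints $V\ge L$ or $V\le U$ ($L,U\in\mathbb{Z}$) on variables of $F_0$. A linearization $F$ of $F_0$ with artificial bounds $B$ is a QF-LIA formula obtained as follows. While some non-linear monomial $Q$ occurs, pick a variable $V$ of $Q$ that has both a lower bound $l$ and an upper bound $u$ in $F_0\cup B$. Introduce a fresh integer variable $v_Q$ and replace every occurrence of $Q$ by $v_Q$. Add, for each integer $K$ with $l\le K\le u$, the clause $V=K\rightarrow v_Q=Q[V:=K]$, where $Q[V:=K]$ is $Q$ with $V$ evaluated at $K$. New non-linear monomials appearing in these clauses are processed in the same way. $F$ does not contain the bounds of $B$. A model of $F$ is an integer assignment to all variables of $F$ (original and fresh) satisfying $F$. *)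

theory Defs
  imports Main "HOL-Library.Multiset"
begin

text \<open>A monomial is a multiset of variables (the empty multiset is the constant
monomial 1); a polynomial is a finite sum of integer-coefficient monomials,
given as a list of (coefficient, monomial) pairs.\<close>

type_synonym 'v monomial = "'v multiset"
type_synonym 'v poly = "(int \<times> 'v monomial) list"

datatype rel = Lt | Le | Eq | Ne | Ge | Gt

text \<open>An atom \<open>Atom r p q\<close> stands for the polynomial (in)equality \<open>p r q\<close>.
A clause is a disjunction of atoms, a CNF formula a conjunction of clauses.\<close>
datatype 'v atom = Atom rel "'v poly" "'v poly"

type_synonym 'v clause = "'v atom list"
type_synonym 'v formula = "'v clause list"

definition eval_mono :: "('v \<Rightarrow> int) \<Rightarrow> 'v monomial \<Rightarrow> int" where
  "eval_mono M m = prod_mset (image_mset M m)"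

definition eval_poly :: "('v \<Rightarrow> int) \<Rightarrow> 'v poly \<Rightarrow> int" where
  "eval_poly M p = (\<Sum>(c, m)\<leftarrow>p. c * eval_mono M m)"

fun eval_rel :: "rel \<Rightarrow> int \<Rightarrow> int \<Rightarrow> bool" where
  "eval_rel Lt a b = (a < b)"
| "eval_rel Le a b = (a \<le> b)"
| "eval_rel Eq a b = (a = b)"
| "eval_rel Ne a b = (a \<noteq> b)"
| "eval_rel Ge a b = (a \<ge> b)"
| "eval_rel Gt a b = (a > b)"

fun sat_atom :: "('v \<Rightarrow> int) \<Rightarrow> 'v atom \<Rightarrow> bool" where
  "sat_atom M (Atom r p q) = eval_rel r (eval_poly M p) (eval_poly M q)"

definition sat_clause :: "('v \<Rightarrow> int) \<Rightarrow> 'v clause \<Rightarrow> bool" where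
  "sat_clause M C = (\<exists>a\<in>set C. sat_atom M a)"

text \<open>\<open>M\<close> is a model of \<open>F\<close>.  Assignments are total; only the values on the
variables of \<open>F\<close> matter.\<close>
definition sat_formula :: "('v \<Rightarrow> int) \<Rightarrow> 'v formula \<Rightarrow> bool" where
  "sat_formula M F = (\<forall>C\<in>set F. sat_clause M C)"

definition poly_vars :: "'v poly \<Rightarrow> 'v set" where
  "poly_vars p = (\<Union>(c, m)\<in>set p. set_mset m)"

fun atom_vars :: "'v atom \<Rightarrow> 'v set" where
  "atom_vars (Atom r p q) = poly_vars p \<union> poly_vars q"

definition formula_vars :: "'v formula \<Rightarrow> 'v set" where
  "formula_vars F = (\<Union>C\<in>set F. \<Union>a\<in>set C. atom_vars a)"

fun atom_monos :: "'v atom \<Rightarrow> 'v monomial set" where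
  "atom_monos (Atom r p q) = snd ` set p \<union> snd ` set q"

definition formula_monos :: "'v formula \<Rightarrow> 'v monomial set" where
  "formula_monos F = (\<Union>C\<in>set F. \<Union>a\<in>set C. atom_monos a)"

definition nonlinear :: "'v monomial \<Rightarrow> bool" where
  "nonlinear m = (size m \<ge> 2)"

definition pvar :: "'v \<Rightarrow> 'v poly" where
  "pvar V = [(1, {#V#})]"

definition pconst :: "int \<Rightarrow> 'v poly" where
  "pconst K = [(K, {#})]"

text \<open>Artificial bounds: \<open>LowerB V L\<close> is \<open>V \<ge> L\<close>, \<open>UpperB V U\<close> is \<open>V \<le> U\<close>.\<close>
datatype 'v bound = LowerB 'v int | UpperB 'v int

definition bound_vars :: "'v bound set \<Rightarrow> 'v set" where
  "bound_vars B = {V. \<exists>K. LowerB V K \<in> B \<or> UpperB V K \<in> B}"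

definition has_lower :: "'v formula \<Rightarrow> 'v bound set \<Rightarrow> 'v \<Rightarrow> int \<Rightarrow> bool" where
  "has_lower F0 B V L =
     (LowerB V L \<in> B \<or> [Atom Ge (pvar V) (pconst L)] \<in> set F0
        \<or> [Atom Le (pconst L) (pvar V)] \<in> set F0)"

definition has_upper :: "'v formula \<Rightarrow> 'v bound set \<Rightarrow> 'v \<Rightarrow> int \<Rightarrow> bool" where
  "has_upper F0 B V U =
     (UpperB V U \<in> B \<or> [Atom Le (pvar V) (pconst U)] \<in> set F0
        \<or> [Atom Ge (pconst U) (pvar V)] \<in> set F0)"

definition repl_poly :: "'v monomial \<Rightarrow> 'v \<Rightarrow> 'v poly \<Rightarrow> 'v poly" where
  "repl_poly Q v p = map (\<lambda>(c, m). if m = Q then (c, {#v#}) else (c, m)) p"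

fun repl_atom :: "'v monomial \<Rightarrow> 'v \<Rightarrow> 'v atom \<Rightarrow> 'v atom" where
  "repl_atom Q v (Atom r p q) = Atom r (repl_poly Q v p) (repl_poly Q v q)"

definition repl_formula :: "'v monomial \<Rightarrow> 'v \<Rightarrow> 'v formula \<Rightarrow> 'v formula" where
  "repl_formula Q v F = map (map (repl_atom Q v)) F"

definition subst_mono :: "'v monomial \<Rightarrow> 'v \<Rightarrow> int \<Rightarrow> 'v poly" where
  "subst_mono Q V K = [(K ^ count Q V, filter_mset (\<lambda>x. x \<noteq> V) Q)]"

text \<open>The clause \<open>V = K \<longrightarrow> v = Q[V:=K]\<close>, i.e. \<open>V \<noteq> K \<or> v = Q[V:=K]\<close>.\<close>
definition lin_clause :: "'v monomial \<Rightarrow> 'v \<Rightarrow> 'v \<Rightarrow> int \<Rightarrow> 'v clause" where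
  "lin_clause Q v V K = [Atom Ne (pvar V) (pconst K), Atom Eq (pvar v) (subst_mono Q V K)]"

inductive lin_step :: "'v formula \<Rightarrow> 'v bound set \<Rightarrow> 'v formula \<Rightarrow> 'v formula \<Rightarrow> bool"
  for F0 :: "'v formula" and B :: "'v bound set" where
  "\<lbrakk> Q \<in> formula_monos G; nonlinear Q; V \<in># Q;
     has_lower F0 B V l; has_upper F0 B V u;
     v \<notin> formula_vars G; v \<notin> formula_vars F0; v \<notin> bound_vars B \<rbrakk>
   \<Longrightarrow> lin_step F0 B G (repl_formula Q v G @ map (lin_clause Q v V) [l..u])"

definition linearization :: "'v formula \<Rightarrow> 'v bound set \<Rightarrow> 'v formula \<Rightarrow> bool" where
  "linearization F0 B F =
     ((lin_step F0 B)\<^sup>*\<^sup>* F0 F \<and> (\<forall>Q\<in>formula_monos F. \<not> nonlinear Q))"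

definition delta :: "int \<Rightarrow> int \<Rightarrow> int \<Rightarrow> int" where
  "delta z l u = (if z < l then l - z else if z \<le> u then 0 else z - u)"

definition cost :: "'v set \<Rightarrow> ('v \<Rightarrow> int) \<Rightarrow> ('v \<Rightarrow> int) \<Rightarrow> ('v \<Rightarrow> int) \<Rightarrow> int" where
  "cost VB l u M = (\<Sum>V\<in>VB. delta (M V) (l V) (u V))"

end

theory Submission
  imports Defs
begin

lemma eval_repl_poly:
  assumes "M v = eval_mono M Q"
  shows "eval_poly M (repl_poly Q v p) = eval_poly M p"
  using assms by (induction p) (auto simp: eval_poly_def repl_poly_def eval_mono_def)

lemma sat_repl_atom:
  assumes "M v = eval_mono M Q"
  shows "sat_atom M (repl_atom Q v a) = sat_atom M a"
  using assms by (cases a) (simp add: eval_repl_poly)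

lemma sat_repl_formula:
  assumes "M v = eval_mono M Q"
  shows "sat_formula M (repl_formula Q v G) = sat_formula M G"
  using assms by (simp add: sat_formula_def sat_clause_def repl_formula_def sat_repl_atom)

lemma eval_subst_mono:
  assumes "M V = K"
  shows "eval_poly M (subst_mono Q V K) = eval_mono M Q"
proof -
  have Q: "Q = filter_mset (\<lambda>x. x = V) Q + filter_mset (\<lambda>x. x \<noteq> V) Q"
    using multiset_partition[of Q "\<lambda>x. x = V"] by simp
  have r: "filter_mset (\<lambda>x. x = V) Q = replicate_mset (count Q V) V"
    by (simp add: filter_eq_replicate_mset)
  have "eval_mono M Q = eval_mono M (filter_mset (\<lambda>x. x = V) Q) * eval_mono M (filter_mset (\<lambda>x. x \<noteq> V) Q)"
  proof -
    have e: "eval_mono M (A + A') = eval_mono M A * eval_mono M A'" for A A'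
      unfolding eval_mono_def by simp
    have "eval_mono M Q = eval_mono M (filter_mset (\<lambda>x. x = V) Q + filter_mset (\<lambda>x. x \<noteq> V) Q)"
      using Q by (rule arg_cong)
    thus ?thesis by (simp only: e)
  qed
  also have "eval_mono M (filter_mset (\<lambda>x. x = V) Q) = K ^ count Q V"
    unfolding r eval_mono_def using assms by simp
  finally show ?thesis by (simp add: subst_mono_def eval_poly_def)
qed

lemma sat_lin_clause:
  assumes "sat_clause M (lin_clause Q v V K)" "M V = K"
  shows "M v = eval_mono M Q"
proof -
  have "M v = eval_poly M (subst_mono Q V K)"
    using assms by (auto simp: sat_clause_def lin_clause_def pvar_def pconst_def
      eval_poly_def eval_mono_def)
  thus ?thesis using eval_subst_mono[of M V K Q] assms(2) by simp
qed

definition lin_cl :: "'v clause \<Rightarrow> bool" where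
  "lin_cl C = (\<forall>a\<in>set C. \<forall>m\<in>atom_monos a. \<not> nonlinear m)"

lemma repl_poly_id: "Q \<notin> snd ` set p \<Longrightarrow> repl_poly Q v p = p"
  unfolding repl_poly_def by (induction p) auto

lemma repl_atom_id: "nonlinear Q \<Longrightarrow> \<forall>m\<in>atom_monos a. \<not> nonlinear m \<Longrightarrow> repl_atom Q v a = a"
proof (cases a)
  case (Atom r p q)
  assume "nonlinear Q" "\<forall>m\<in>atom_monos a. \<not> nonlinear m"
  hence "Q \<notin> snd ` set p" "Q \<notin> snd ` set q" using Atom by auto
  thus ?thesis using Atom by (simp add: repl_poly_id)
qed

lemma lin_step_keep:
  assumes "lin_step F0 B G G'" "C \<in> set G" "lin_cl C"
  shows "C \<in> set G'"
  using assms
proof cases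
  case (1 Q V l u v)
  have "map (repl_atom Q v) C = C"
  proof (rule map_idI)
    fix a assume "a \<in> set C"
    thus "repl_atom Q v a = a" using 1(3) assms(3) unfolding lin_cl_def by (simp add: repl_atom_id)
  qed
  hence "C \<in> set (repl_formula Q v G)" using assms(2) unfolding repl_formula_def
    by (metis image_eqI list.set_map)
  thus ?thesis using 1(1) by simp
qed

lemma keep:
  assumes "(lin_step F0 B)\<^sup>*\<^sup>* F0 G" "C \<in> set F0" "lin_cl C"
  shows "C \<in> set G"
  using assms by (induction rule: rtranclp_induct) (auto intro: lin_step_keep)

lemma lin_step_back:
  assumes "lin_step F0 B G G'" "sat_formula M G'"
    and lo: "\<And>V L. has_lower F0 B V L \<Longrightarrow> L \<le> M V"
    and up: "\<And>V U. has_upper F0 B V U \<Longrightarrow> M V \<le> U"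
  shows "sat_formula M G"
  using assms(1)
proof cases
  case (1 Q V l u v)
  have "l \<le> M V" using lo[OF 1(5)] .
  moreover have "M V \<le> u" using up[OF 1(6)] .
  ultimately have "M V \<in> set [l..u]" by simp
  hence "lin_clause Q v V (M V) \<in> set G'" using 1(1) by simp
  hence sc: "sat_clause M (lin_clause Q v V (M V))" using assms(2) unfolding sat_formula_def by blast
  have "M v = eval_mono M Q" using sat_lin_clause[OF sc refl] .
  moreover have "sat_formula M (repl_formula Q v G)" using assms(2) 1(1)
    unfolding sat_formula_def by simp
  ultimately show ?thesis using sat_repl_formula[of M v Q G] by simp
qed

lemma delta_nonneg: "delta z l u \<ge> 0"
  by (simp add: delta_def)

lemma delta_zero: "delta z l u = 0 \<Longrightarrow> l \<le> z \<and> z \<le> u"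
  by (simp add: delta_def split: if_splits)

lemma finite_bound_vars: "finite B \<Longrightarrow> finite (bound_vars B)"
proof -
  assume "finite B"
  have "bound_vars B \<subseteq> (\<lambda>b. case b of LowerB V K \<Rightarrow> V | UpperB V K \<Rightarrow> V) ` B"
    unfolding bound_vars_def by (auto intro: rev_image_eqI)
  thus ?thesis using \<open>finite B\<close> finite_subset by blast
qed

theorem lemma3p4:
  fixes F0 F :: "'v formula" and B :: "'v bound set"
    and l u :: "'v \<Rightarrow> int" and M :: "'v \<Rightarrow> int"
  assumes "finite B"
    and "bound_vars B \<subseteq> formula_vars F0"
    and "\<And>V L. LowerB V L \<in> B \<Longrightarrow> L = l V"
    and "\<And>V U. UpperB V U \<in> B \<Longrightarrow> U = u V"
    and "linearization F0 B F"
    and "sat_formula M F"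
  shows "cost (bound_vars B) l u M \<ge> 0
         \<and> (cost (bound_vars B) l u M = 0 \<longrightarrow> sat_formula M F0)"
proof
  show "cost (bound_vars B) l u M \<ge> 0"
    unfolding cost_def by (simp add: sum_nonneg delta_nonneg)
next
  show "cost (bound_vars B) l u M = 0 \<longrightarrow> sat_formula M F0"
  proof
    assume c: "cost (bound_vars B) l u M = 0"
    have fin: "finite (bound_vars B)" using assms(1) finite_bound_vars by blast
    have "\<forall>V\<in>bound_vars B. delta (M V) (l V) (u V) = 0"
      using c fin unfolding cost_def by (subst (asm) sum_nonneg_eq_0_iff) (auto simp: delta_nonneg)
    hence bd: "\<And>V. V \<in> bound_vars B \<Longrightarrow> l V \<le> M V \<and> M V \<le> u V"
      using delta_zero by blast
    have rt: "(lin_step F0 B)\<^sup>*\<^sup>* F0 F" using assms(5) unfolding linearization_def by blast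
    have unit: "\<And>C. C \<in> set F0 \<Longrightarrow> lin_cl C \<Longrightarrow> sat_clause M C"
      using keep[OF rt] assms(6) unfolding sat_formula_def by blast
    have lo: "L \<le> M V" if hl: "has_lower F0 B V L" for V L
    proof -
      consider "LowerB V L \<in> B" | "[Atom Ge (pvar V) (pconst L)] \<in> set F0"
        | "[Atom Le (pconst L) (pvar V)] \<in> set F0" using hl unfolding has_lower_def by blast
      thus ?thesis
      proof cases
        case 1
        hence "V \<in> bound_vars B" unfolding bound_vars_def by blast
        thus ?thesis using bd assms(3)[OF 1] by auto
      next
        case 2
        from unit[OF 2] show ?thesis
          by (auto simp: lin_cl_def nonlinear_def pvar_def pconst_def sat_clause_def
              eval_poly_def eval_mono_def)
      next
        case 3
        from unit[OF 3] show ?thesis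
          by (auto simp: lin_cl_def nonlinear_def pvar_def pconst_def sat_clause_def
              eval_poly_def eval_mono_def)
      qed
    qed
    have up: "M V \<le> U" if hu: "has_upper F0 B V U" for V U
    proof -
      consider "UpperB V U \<in> B" | "[Atom Le (pvar V) (pconst U)] \<in> set F0"
        | "[Atom Ge (pconst U) (pvar V)] \<in> set F0" using hu unfolding has_upper_def by blast
      thus ?thesis
      proof cases
        case 1
        hence "V \<in> bound_vars B" unfolding bound_vars_def by blast
        thus ?thesis using bd assms(4)[OF 1] by auto
      next
        case 2
        from unit[OF 2] show ?thesis
          by (auto simp: lin_cl_def nonlinear_def pvar_def pconst_def sat_clause_def
              eval_poly_def eval_mono_def)
      next
        case 3
        from unit[OF 3] show ?thesis
          by (auto simp: lin_cl_def nonlinear_def pvar_def pconst_def sat_clause_def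
              eval_poly_def eval_mono_def)
      qed
    qed
    have "\<And>G. (lin_step F0 B)\<^sup>*\<^sup>* F0 G \<Longrightarrow> sat_formula M G \<longrightarrow> sat_formula M F0"
    proof -
      fix G assume "(lin_step F0 B)\<^sup>*\<^sup>* F0 G"
      thus "sat_formula M G \<longrightarrow> sat_formula M F0"
      proof (induction rule: rtranclp_induct)
        case base thus ?case by simp
      next
        case (step y z)
        have "sat_formula M y" if sz: "sat_formula M z"
          using sz lo up by (rule lin_step_back[OF step(2)])
        thus ?case using step(3) by blast
      qed
    qed
    thus "sat_formula M F0" using rt assms(6) by blast
  qed
qed

end
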